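(* Let $r\in\mathbb{N}$. There is a constant $c_3>0$ depending only on $r$ such that for every $b\in(0,\pi]$, every $n\in\mathbb{N}$, every trigonometric polynomial $T_n\in\mathcal{T}_n$ satisfying $tT_n^{(r+1)}(t)\ge 0$ for $|t|\le b$, and every algebraic polynomial $P_r$ of degree $\le r$, $$n\|F_r+P_r-T_n\|_{[-b,b]}\ge c_3 b^r,$$ where $F_r(x):=\frac{1}{r!}|x|x^{r-1}$.
   Context: $\mathcal{T}_n$ is the space of real trigonometric polynomials of degree $\le n$. For a function $g$ on $[a,b]$, $\|g\|_{[a,b]}:=\max_{x\in[a,b]}|g(x)|$. *)

theory Defs
  imports "HOL-Analysis.Analysis" "HOL-Computational_Algebra.Polynomial"
begin

definition trig_poly :: "nat \<Rightarrow> (real \<Rightarrow> real) \<Rightarrow> bool" where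
  "trig_poly n T \<longleftrightarrow> (\<exists>a b :: nat \<Rightarrow> real. \<forall>x.
      T x = a 0 + (\<Sum>k=1..n. a k * cos (real k * x) + b k * sin (real k * x)))"

definition sup_norm_on :: "real \<Rightarrow> real \<Rightarrow> (real \<Rightarrow> real) \<Rightarrow> real" where
  "sup_norm_on a b g = (SUP x\<in>{a..b}. \<bar>g x\<bar>)"

definition F :: "nat \<Rightarrow> real \<Rightarrow> real" where
  "F r x = \<bar>x\<bar> * x ^ (r - 1) / fact r"

end

theory Submission
  imports Defs "HOL-Complex_Analysis.Complex_Analysis"
begin


lemma poly_of_real_map: "poly (map_poly of_real p) (of_real x :: complex) = of_real (poly p x)"
  by (induction p) (auto simp: map_poly_pCons)

lemma pderiv_of_real_map: "pderiv (map_poly (of_real :: real \<Rightarrow> complex) p) = map_poly of_real (pderiv p)"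
  by (rule poly_eqI) (simp add: coeff_pderiv coeff_map_poly)

lemma poly_sum_le:
  fixes p :: "'a::comm_semiring_1 poly"
  assumes "degree p \<le> m"
  shows "poly p x = (\<Sum>k\<le>m. coeff p k * x ^ k)"
proof -
  have "poly p x = (\<Sum>k\<le>degree p. coeff p k * x ^ k)" by (rule poly_altdef)
  also have "\<dots> = (\<Sum>k\<le>m. coeff p k * x ^ k)"
    by (rule sum.mono_neutral_left) (use assms in \<open>auto simp: coeff_eq_0\<close>)
  finally show ?thesis .
qed

lemma cos_growth:
  fixes p :: "real poly" and m :: nat and M :: real
  assumes deg: "degree p \<le> m" and bnd: "\<And>y. -1 \<le> y \<Longrightarrow> y \<le> 1 \<Longrightarrow> \<bar>poly p y\<bar> \<le> M"
  shows "norm (poly (map_poly of_real p) (cos z)) \<le> M * exp (m * \<bar>Im z\<bar>)"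
proof -
  define pc where "pc = map_poly (of_real :: real \<Rightarrow> complex) p"
  have degc: "degree pc \<le> m" using deg by (simp add: pc_def degree_map_poly)
  define q where "q w = (\<Sum>k\<le>m. coeff pc k * (w^2+1)^k * w^(m-k) / 2^k)" for w :: complex
  have qeq: "q w = w^m * poly pc ((w + 1/w)/2)" if "w \<noteq> 0" for w
  proof -
    have "w^m * poly pc ((w + 1/w)/2) = (\<Sum>k\<le>m. coeff pc k * (w^m * ((w + 1/w)/2)^k))"
      by (simp add: poly_sum_le[OF degc] sum_distrib_left algebra_simps)
    also have "\<dots> = q w" unfolding q_def
    proof (rule sum.cong[OF refl])
      fix k assume "k \<in> {..m}"
      then have km: "m = (m-k) + k" by auto
      have "w^m * ((w + 1/w)/2)^k = w^(m-k) * (w^k * ((w + 1/w)/2)^k)"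
        by (subst km) (simp add: power_add)
      also have "w^k * ((w + 1/w)/2)^k = (w * ((w + 1/w)/2))^k"
        by (simp only: power_mult_distrib)
      also have "w * ((w + 1/w)/2) = (w^2+1)/2" using that by (simp add: field_simps power2_eq_square)
      finally show "coeff pc k * (w^m * ((w + 1/w)/2)^k) = coeff pc k * (w^2+1)^k * w^(m-k) / 2^k"
        by (simp add: power_divide)
    qed
    finally show ?thesis by simp
  qed
  have hol: "q holomorphic_on A" for A unfolding q_def by (intro holomorphic_intros) auto
  have circ: "norm (q w) \<le> M" if "norm w = 1" for w
  proof -
    have w0: "w \<noteq> 0" using that by auto
    have "w * cnj w = 1" using complex_norm_square[of w] that by simp
    then have "1/w = cnj w" using w0 by (simp add: field_simps)
    then have "(w + 1/w)/2 = of_real (Re w)" by (simp add: complex_add_cnj)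
    then have "q w = w^m * of_real (poly p (Re w))"
      using qeq[OF w0] by (simp add: pc_def poly_of_real_map)
    then have "norm (q w) = \<bar>poly p (Re w)\<bar>" using that by (simp add: norm_mult norm_power)
    also have "\<dots> \<le> M" using abs_Re_le_cmod[of w] that by (intro bnd) auto
    finally show ?thesis .
  qed
  have disk: "norm (q w) \<le> M" if "norm w \<le> 1" for w
  proof (rule maximum_modulus_frontier[of q "cball 0 1"])
    show "q holomorphic_on interior (cball 0 1)" by (rule hol)
    show "continuous_on (closure (cball 0 1)) q" using hol[of UNIV] 
      by (meson holomorphic_on_imp_continuous_on continuous_on_subset subset_UNIV)
    show "bounded (cball (0::complex) 1)" by simp
    show "\<And>z. z \<in> frontier (cball 0 1) \<Longrightarrow> norm (q z) \<le> M" using circ by auto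
    show "w \<in> cball 0 1" using that by auto
  qed
  have key: "norm (poly pc (cos z)) \<le> M * exp (m * Im z)" if "Im z \<ge> 0" for z
  proof -
    define w where "w = exp (\<i> * z)"
    have w0: "w \<noteq> 0" by (simp add: w_def)
    have nw: "norm w = exp (- Im z)" by (simp add: w_def)
    have nw1: "norm w \<le> 1" using that by (simp add: nw)
    have cz: "(w + 1/w)/2 = cos z" by (simp add: w_def cos_exp_eq exp_minus inverse_eq_divide)
    have "q w = w^m * poly pc (cos z)" using qeq[OF w0] unfolding cz .
    then have "poly pc (cos z) = q w / w^m" using w0 by (simp add: field_simps)
    then have "norm (poly pc (cos z)) = norm (q w) / exp (- Im z)^m"
      by (simp add: norm_divide norm_power nw)
    also have "\<dots> \<le> M / exp (- Im z)^m"
      by (intro divide_right_mono disk nw1) simp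
    also have "\<dots> = M * exp (m * Im z)"
      by (simp add: exp_minus power_inverse divide_inverse exp_of_nat_mult[symmetric] 
          flip: exp_of_nat_mult)
    finally show ?thesis .
  qed
  show ?thesis
  proof (cases "Im z \<ge> 0")
    case True then show ?thesis using key[of z] by (simp add: pc_def)
  next
    case False
    then have "norm (poly pc (cos (-z))) \<le> M * exp (m * Im (-z))" by (intro key) simp
    then show ?thesis using False by (simp add: pc_def)
  qed
qed

lemma alg_deriv_bound:
  fixes p :: "real poly" and m :: nat and M y :: real
  assumes m1: "m \<ge> 1" and deg: "degree p \<le> m"
    and bnd: "\<And>y. -1 \<le> y \<Longrightarrow> y \<le> 1 \<Longrightarrow> \<bar>poly p y\<bar> \<le> M"
    and y: "\<bar>y\<bar> \<le> 1/2"
  shows "\<bar>poly (pderiv p) y\<bar> \<le> 6 * m * M"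
proof -
  define pc where "pc = map_poly (of_real :: real \<Rightarrow> complex) p"
  define f where "f z = poly pc (cos z)" for z :: complex
  define \<theta> where "\<theta> = arccos y"
  have M0: "0 \<le> M" using bnd[of 0] by auto
  have cth: "cos \<theta> = y" using y by (simp add: \<theta>_def cos_arccos)
  have sth: "sin \<theta> = sqrt (1 - y^2)" using y by (simp add: \<theta>_def sin_arccos)
  have r0: "0 < 1 / real m" using m1 by simp
  have y2': "y^2 \<le> (1/2)^2" using y by (metis abs_ge_zero power2_abs power_mono)
  then have y2: "y^2 \<le> 1/4" by (simp add: power2_eq_square)
  have sq0: "0 \<le> 1 - y^2" using y2 by simp
  have "norm ((deriv ^^ 1) f (of_real \<theta>)) \<le> fact 1 * (M * exp 1) / (1 / real m) ^ 1"
  proof (rule Cauchy_inequality[OF _ _ r0])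
    show "f holomorphic_on ball (of_real \<theta>) (1 / real m)" unfolding f_def by (intro holomorphic_intros)
    show "continuous_on (cball (of_real \<theta>) (1 / real m)) f" unfolding f_def by (intro continuous_intros)
    fix x :: complex assume "norm (of_real \<theta> - x) = 1 / real m"
    then have "\<bar>Im x\<bar> \<le> 1 / real m" using abs_Im_le_cmod[of "of_real \<theta> - x"] by simp
    then have "m * \<bar>Im x\<bar> \<le> 1" using m1 by (simp add: field_simps)
    then have "M * exp (m * \<bar>Im x\<bar>) \<le> M * exp 1" using M0 by (intro mult_left_mono) auto
    then show "norm (f x) \<le> M * exp 1"
      using cos_growth[OF deg bnd, of x] unfolding f_def pc_def by linarith
  qed
  moreover have "(f has_field_derivative poly (pderiv pc) (cos (of_real \<theta>)) * (- sin (of_real \<theta>))) (at (of_real \<theta>))"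
    unfolding f_def by (rule DERIV_chain2[OF poly_DERIV DERIV_cos])
  then have "deriv f (of_real \<theta>) = of_real (poly (pderiv p) y * (- sqrt (1 - y^2)))"
    by (simp add: DERIV_imp_deriv cos_of_real sin_of_real cth sth pc_def pderiv_of_real_map poly_of_real_map)
  ultimately have "\<bar>poly (pderiv p) y\<bar> * sqrt (1 - y^2) \<le> M * exp 1 * m"
    using sq0 by (simp add: norm_mult)
  moreover have "1/2 \<le> sqrt (1 - y^2)"
  proof -
    have "(1/2)^2 \<le> 1 - y^2" using y2 by (simp add: power2_eq_square)
    then show ?thesis by (metis real_le_rsqrt)
  qed
  ultimately have "\<bar>poly (pderiv p) y\<bar> * (1/2) \<le> M * exp 1 * m"
    by (meson abs_ge_zero mult_left_mono order_trans)
  moreover have "M * exp 1 * m \<le> M * 3 * m"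
    using e_less_272 M0 by (intro mult_right_mono mult_left_mono) auto
  ultimately show ?thesis by (simp add: algebra_simps)
qed

lemma incr_lower:
  fixes f f' :: "real \<Rightarrow> real"
  assumes "a \<le> b" and der: "\<And>t. (f has_real_derivative f' t) (at t)"
    and lb: "\<And>t. a < t \<Longrightarrow> t < b \<Longrightarrow> m \<le> f' t"
  shows "m * (b - a) \<le> f b - f a"
proof (cases "a = b")
  case False
  then have "a < b" using assms by simp
  from MVT2[OF this der] obtain z where z: "a < z" "z < b" "f b - f a = (b - a) * f' z" by blast
  then show ?thesis using lb[OF z(1,2)] \<open>a < b\<close> by (simp add: mult.commute mult_left_mono)
qed simp

lemma incr_upper:
  fixes f f' :: "real \<Rightarrow> real"
  assumes "a \<le> b" and der: "\<And>t. (f has_real_derivative f' t) (at t)"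
    and ub: "\<And>t. a < t \<Longrightarrow> t < b \<Longrightarrow> f' t \<le> m"
  shows "f b - f a \<le> m * (b - a)"
proof -
  have "(-m) * (b - a) \<le> (- f b) - (- f a)"
    by (rule incr_lower[OF assms(1), of "\<lambda>t. - f t" "\<lambda>t. - f' t"]) (auto intro: derivative_intros der simp: ub)
  then show ?thesis by simp
qed

lemma mvt_abs:
  fixes f f' :: "real \<Rightarrow> real"
  assumes der: "\<And>t. (f has_real_derivative f' t) (at t)"
    and bd: "\<And>t. min a b \<le> t \<Longrightarrow> t \<le> max a b \<Longrightarrow> \<bar>f' t\<bar> \<le> K"
  shows "\<bar>f b - f a\<bar> \<le> K * \<bar>b - a\<bar>"
proof (cases "a \<le> b")
  case True
  have b1: "-K \<le> f' t" "f' t \<le> K" if "a < t" "t < b" for t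
    using bd[of t] True that by (auto simp: abs_le_iff)
  have "(-K) * (b - a) \<le> f b - f a"
    by (rule incr_lower[OF True der b1(1)])
  moreover have "f b - f a \<le> K * (b - a)"
    by (rule incr_upper[OF True der b1(2)])
  ultimately show ?thesis using True by (simp add: abs_le_iff)
next
  case False
  then have F: "b \<le> a" by simp
  have b1: "-K \<le> f' t" "f' t \<le> K" if "b < t" "t < a" for t
    using bd[of t] F that by (auto simp: abs_le_iff)
  have "(-K) * (a - b) \<le> f a - f b"
    by (rule incr_lower[OF F der b1(1)])
  moreover have "f a - f b \<le> K * (a - b)"
    by (rule incr_upper[OF F der b1(2)])
  ultimately show ?thesis using F by (simp add: abs_le_iff)
qed

lemma alg_mv:
  fixes p :: "real poly" and m :: nat and M \<sigma> x :: real
  assumes m1: "m \<ge> 1" and deg: "degree p \<le> m" and s0: "0 < \<sigma>"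
    and bnd: "\<And>y. \<bar>y\<bar> \<le> \<sigma> \<Longrightarrow> \<bar>poly p y\<bar> \<le> M"
    and x: "\<bar>x\<bar> \<le> \<sigma> / 2"
  shows "\<bar>poly p x - poly p 0\<bar> \<le> 6 * real m * M * \<bar>x\<bar> / \<sigma>"
proof -
  define q where "q = pcompose p [:0, \<sigma>:]"
  have pq: "poly q y = poly p (\<sigma> * y)" for y by (simp add: q_def poly_pcompose mult.commute)
  have degq: "degree q \<le> m" using deg s0 by (simp add: q_def degree_pcompose)
  have bq: "\<bar>poly q y\<bar> \<le> M" if "-1 \<le> y" "y \<le> 1" for y
    using that s0 by (auto simp: pq abs_mult intro!: bnd mult_left_le)
  define y where "y = x / \<sigma>"
  have y: "\<bar>y\<bar> \<le> 1/2" using x s0 by (simp add: y_def abs_divide field_simps)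
  have "\<bar>poly q y - poly q 0\<bar> \<le> (6 * real m * M) * \<bar>y - 0\<bar>"
  proof (rule mvt_abs[OF poly_DERIV])
    fix t assume "min 0 y \<le> t" "t \<le> max 0 y"
    then have "\<bar>t\<bar> \<le> 1/2" using y by auto
    then show "\<bar>poly (pderiv q) t\<bar> \<le> 6 * real m * M" using alg_deriv_bound[OF m1 degq bq] by simp
  qed
  then show ?thesis using s0 by (simp add: pq y_def abs_divide)
qed



definition tp :: "nat \<Rightarrow> (nat \<Rightarrow> real) \<Rightarrow> (nat \<Rightarrow> real) \<Rightarrow> real \<Rightarrow> real" where
  "tp n a b x = a 0 + (\<Sum>k=1..n. a k * cos (real k * x) + b k * sin (real k * x))"

lemma trig_poly_tp: "trig_poly n T \<longleftrightarrow> (\<exists>a b. T = tp n a b)"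
  unfolding trig_poly_def tp_def by (auto simp: fun_eq_iff)

definition rep :: "nat \<Rightarrow> (real \<Rightarrow> real) \<Rightarrow> bool" where
  "rep k f \<longleftrightarrow> (\<exists>A B :: real poly. degree A \<le> 3*k \<and> degree B \<le> 3*k \<and>
      (\<forall>x. f x = poly A (sin (x/2)) + cos (x/2) * poly B (sin (x/2))))"

lemma rep_mono: "rep k f \<Longrightarrow> k \<le> l \<Longrightarrow> rep l f"
  unfolding rep_def by (meson le_trans mult_le_mono2)

lemma rep_add: "rep k f \<Longrightarrow> rep k g \<Longrightarrow> rep k (\<lambda>x. f x + g x)"
proof -
  assume "rep k f" "rep k g"
  then obtain A B A' B' :: "real poly" where
    "degree A \<le> 3*k" "degree B \<le> 3*k" "\<forall>x. f x = poly A (sin (x/2)) + cos (x/2) * poly B (sin (x/2))"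
    "degree A' \<le> 3*k" "degree B' \<le> 3*k" "\<forall>x. g x = poly A' (sin (x/2)) + cos (x/2) * poly B' (sin (x/2))"
    unfolding rep_def by metis
  then show ?thesis unfolding rep_def
    by (intro exI[of _ "A + A'"] exI[of _ "B + B'"]) (auto intro: degree_add_le simp: algebra_simps)
qed

lemma rep_smult: "rep k f \<Longrightarrow> rep k (\<lambda>x. c * f x)"
proof -
  assume "rep k f"
  then obtain A B :: "real poly" where
    "degree A \<le> 3*k" "degree B \<le> 3*k" "\<forall>x. f x = poly A (sin (x/2)) + cos (x/2) * poly B (sin (x/2))"
    unfolding rep_def by metis
  then show ?thesis unfolding rep_def
    by (intro exI[of _ "smult c A"] exI[of _ "smult c B"]) (auto simp: algebra_simps)
qed

lemma rep_const: "rep k (\<lambda>x. c)"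
  unfolding rep_def by (intro exI[of _ "[:c:]"] exI[of _ 0]) auto

lemma half_id: fixes x :: real shows "cos x = 1 - 2 * sin (x/2)^2" "sin x = 2 * sin (x/2) * cos (x/2)"
  "cos (x/2)^2 = 1 - sin (x/2)^2"
proof -
  show "cos x = 1 - 2 * sin (x/2)^2" using cos_double_sin[of "x/2"] by simp
  show "sin x = 2 * sin (x/2) * cos (x/2)" using sin_double[of "x/2"] by simp
  show "cos (x/2)^2 = 1 - sin (x/2)^2" by (rule cos_squared_eq)
qed

lemma rep_cos: "rep k f \<Longrightarrow> rep (Suc k) (\<lambda>x. cos x * f x)"
proof -
  assume "rep k f"
  then obtain A B :: "real poly" where
    d: "degree A \<le> 3*k" "degree B \<le> 3*k" and e: "\<forall>x. f x = poly A (sin (x/2)) + cos (x/2) * poly B (sin (x/2))"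
    unfolding rep_def by metis
  have dA: "degree ([:1,0,-2:] * A) \<le> 3 * Suc k"
    using degree_mult_le[of "[:1,0,-2:]" A] d by simp
  have dB: "degree ([:1,0,-2:] * B) \<le> 3 * Suc k"
    using degree_mult_le[of "[:1,0,-2:]" B] d by simp
  show ?thesis unfolding rep_def
    by (intro exI[of _ "[:1,0,-2:] * A"] exI[of _ "[:1,0,-2:] * B"] conjI dA dB allI)
       (simp add: e half_id(1)[of x for x] algebra_simps power2_eq_square)
qed

lemma rep_sin: "rep k f \<Longrightarrow> rep (Suc k) (\<lambda>x. sin x * f x)"
proof -
  assume "rep k f"
  then obtain A B :: "real poly" where
    d: "degree A \<le> 3*k" "degree B \<le> 3*k" and e: "\<forall>x. f x = poly A (sin (x/2)) + cos (x/2) * poly B (sin (x/2))"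
    unfolding rep_def by metis
  have dA: "degree ([:0,2,0,-2:] * B) \<le> 3 * Suc k"
    using degree_mult_le[of "[:0,2,0,-2:]" B] d by simp
  have dB: "degree ([:0,2:] * A) \<le> 3 * Suc k"
    using degree_mult_le[of "[:0,2:]" A] d by simp
  have "sin x * f x = poly ([:0,2,0,-2:] * B) (sin (x/2)) + cos (x/2) * poly ([:0,2:] * A) (sin (x/2))" for x
  proof -
    have "sin x * f x = 2 * sin (x/2) * cos (x/2) * poly A (sin (x/2)) + 2 * sin (x/2) * cos (x/2)^2 * poly B (sin (x/2))"
      by (simp add: e half_id(2)[of x] algebra_simps power2_eq_square)
    also have "\<dots> = 2 * sin (x/2) * cos (x/2) * poly A (sin (x/2)) + 2 * sin (x/2) * (1 - sin (x/2)^2) * poly B (sin (x/2))"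
      by (simp only: half_id(3))
    finally show ?thesis by (simp add: algebra_simps power2_eq_square power3_eq_cube)
  qed
  then show ?thesis unfolding rep_def
    by (intro exI[of _ "[:0,2,0,-2:] * B"] exI[of _ "[:0,2:] * A"] conjI dA dB allI) simp
qed

lemma rep_cos_sin: "rep k (\<lambda>x. cos (real k * x)) \<and> rep k (\<lambda>x. sin (real k * x))"
proof (induction k)
  case 0
  show ?case using rep_const[of 0 1] rep_const[of 0 0] by simp
next
  case (Suc k)
  have c: "cos (real (Suc k) * x) = cos x * cos (real k * x) + (-1) * (sin x * sin (real k * x))" for x
    by (simp add: distrib_right cos_add)
  have s: "sin (real (Suc k) * x) = sin x * cos (real k * x) + cos x * sin (real k * x)" for x
    by (simp add: distrib_right sin_add)
  show ?case unfolding c s using Suc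
    by (intro conjI rep_add rep_smult rep_cos rep_sin) auto
qed

lemma rep_tp: "rep n (tp n a b)"
proof (induction n)
  case 0
  then show ?case by (simp add: tp_def rep_const)
next
  case (Suc n)
  have e: "tp (Suc n) a b = (\<lambda>x. tp n a b x + (a (Suc n) * cos (real (Suc n) * x) + b (Suc n) * sin (real (Suc n) * x)))"
    by (simp add: tp_def fun_eq_iff)
  show ?case unfolding e using rep_mono[OF Suc] rep_cos_sin[of "Suc n"]
    by (intro rep_add rep_smult) auto
qed

lemma tp_periodic: "tp n a b (2*pi - x) = tp n a b (-x)"
proof -
  have "cos (real k * (2*pi - x)) = cos (real k * (-x))" "sin (real k * (2*pi - x)) = sin (real k * (-x))" for k
  proof -
    have e: "real k * (2*pi - x) = real k * (-x) + 2*pi*real k" by (simp add: algebra_simps)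
    have c1: "cos (2*pi*real k) = 1" using cos_int_2pin[of "int k"] by simp
    have s1: "sin (2*pi*real k) = 0" using sin_int_2pin[of "int k"] by simp
    show "cos (real k * (2*pi - x)) = cos (real k * (-x))" unfolding e cos_add c1 s1 by simp
    show "sin (real k * (2*pi - x)) = sin (real k * (-x))" unfolding e sin_add c1 s1 by simp
  qed
  then show ?thesis by (simp add: tp_def)
qed



lemma local_bern:
  fixes S :: "real \<Rightarrow> real" and n :: nat and \<beta> M t :: real
  assumes n1: "n \<ge> 1" and b0: "0 < \<beta>" and bpi: "\<beta> \<le> pi/2" and tpS: "trig_poly n S"
    and bnd: "\<And>x. \<bar>x\<bar> \<le> \<beta> \<Longrightarrow> \<bar>S x\<bar> \<le> M" and t0: "0 \<le> t" and t1: "t \<le> \<beta>/4"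
  shows "\<bar>S t - S 0\<bar> \<le> 110 * n * t * M / \<beta>"
proof -
  obtain a b where Sab: "S = tp n a b" using tpS trig_poly_tp by blast
  obtain A B :: "real poly" where dA: "degree A \<le> 3*n" and dB: "degree B \<le> 3*n"
    and dec: "\<And>x. S x = poly A (sin (x/2)) + cos (x/2) * poly B (sin (x/2))"
    using rep_tp[of n a b] unfolding rep_def Sab by metis
  have per: "S (2*pi - x) = S (-x)" for x unfolding Sab by (rule tp_periodic)
  have M0: "0 \<le> M" using bnd[of 0] b0 by auto
  have pi3: "pi/4 \<le> pi/3" by (simp add: field_simps)
  have cos_half: "1/2 \<le> cos u" if "\<bar>u\<bar> \<le> pi/3" for u :: real
  proof -
    have "cos (pi/3) \<le> cos \<bar>u\<bar>" using that by (intro cos_monotone_0_pi_le) auto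
    then show ?thesis by (simp add: cos_60)
  qed
  define \<sigma> where "\<sigma> = sin (\<beta>/2)"
  have \<sigma>lb: "\<beta>/4 \<le> \<sigma>"
  proof -
    have "(1/2) * (\<beta>/2 - 0) \<le> sin (\<beta>/2) - sin 0"
    proof (rule incr_lower[of 0 "\<beta>/2" sin cos])
      show "0 \<le> \<beta>/2" using b0 by simp
      show "\<And>t. (sin has_real_derivative cos t) (at t)" by (rule DERIV_sin)
      fix u assume "0 < u" "u < \<beta>/2"
      then show "1/2 \<le> cos u" using bpi pi3 by (intro cos_half) auto
    qed
    then show ?thesis by (simp add: \<sigma>_def)
  qed
  have \<sigma>0: "0 < \<sigma>" using \<sigma>lb b0 by simp
  have \<sigma>1: "\<sigma> \<le> 1" by (simp add: \<sigma>_def)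
  have AB: "\<bar>poly A y\<bar> \<le> M \<and> \<bar>poly B y\<bar> \<le> 2 * M" if y: "\<bar>y\<bar> \<le> \<sigma>" for y
  proof -
    define x where "x = 2 * arcsin y"
    have y1: "-1 \<le> y" "y \<le> 1" using y \<sigma>1 by auto
    have sx: "sin (x/2) = y" using y1 by (simp add: x_def)
    have as: "arcsin \<sigma> = \<beta>/2" unfolding \<sigma>_def using b0 bpi by (intro arcsin_sin) auto
    have "arcsin y \<le> \<beta>/2" using y y1 \<sigma>1 as arcsin_le_mono[of y \<sigma>] by auto
    moreover have "arcsin (-y) \<le> \<beta>/2" using y y1 \<sigma>1 as arcsin_le_mono[of "-y" \<sigma>] by auto
    ultimately have ax: "\<bar>x/2\<bar> \<le> \<beta>/2" by (auto simp: x_def arcsin_minus y1)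
    then have xb: "\<bar>x\<bar> \<le> \<beta>" by simp
    have cx: "1/2 \<le> cos (x/2)" using ax bpi pi3 by (intro cos_half) auto
    have e1: "S x = poly A y + cos (x/2) * poly B y" using dec[of x] sx by simp
    have hp: "(2*pi - x)/2 = pi - x/2" by simp
    have e2: "S (-x) = poly A y - cos (x/2) * poly B y" using dec[of "2*pi - x"] sx per[of x] unfolding hp by simp
    have b1: "\<bar>S x\<bar> \<le> M" "\<bar>S (-x)\<bar> \<le> M" using bnd xb by auto
    have "poly A y = (S x + S (-x))/2" using e1 e2 by simp
    then have "\<bar>poly A y\<bar> \<le> M" using b1 by simp
    moreover have "cos (x/2) * poly B y = (S x - S (-x))/2" using e1 e2 by simp
    then have cb: "cos (x/2) * \<bar>poly B y\<bar> \<le> M" using b1 cx by (simp add: abs_mult)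
    have "(1/2) * \<bar>poly B y\<bar> \<le> cos (x/2) * \<bar>poly B y\<bar>" using cx by (intro mult_right_mono) auto
    then have "\<bar>poly B y\<bar> \<le> 2 * M" using cb by simp
    ultimately show ?thesis by simp
  qed
  define s where "s = sin (t/2)"
  have s0: "0 \<le> s" unfolding s_def using t0 t1 b0 bpi by (intro sin_ge_zero) auto
  have s1: "s \<le> t/2" unfolding s_def using t0 by (intro sin_x_le_x) auto
  have s2: "\<bar>s\<bar> \<le> \<sigma>/2" using s0 s1 t1 \<sigma>lb by simp
  have m1: "3*n \<ge> 1" using n1 by simp
  have dA': "\<bar>poly A s - poly A 0\<bar> \<le> 6 * real (3*n) * M * \<bar>s\<bar> / \<sigma>"
    by (rule alg_mv[OF m1 dA \<sigma>0 _ s2]) (use AB in auto)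
  have dB': "\<bar>poly B s - poly B 0\<bar> \<le> 6 * real (3*n) * (2*M) * \<bar>s\<bar> / \<sigma>"
    by (rule alg_mv[OF m1 dB \<sigma>0 _ s2]) (use AB in auto)
  have B0: "\<bar>poly B 0\<bar> \<le> 2 * M" using AB[of 0] \<sigma>0 by simp
  define c where "c = cos (t/2)"
  have c1: "c \<le> 1" "0 \<le> c" unfolding c_def using t1 bpi b0 t0 pi3 cos_half[of "t/2"] by auto
  have c2: "1 - c \<le> t/2"
  proof -
    have "(-1) * (t/2 - 0) \<le> cos (t/2) - cos 0"
      by (rule incr_lower[of 0 "t/2" cos "\<lambda>u. - sin u"]) (use t0 in auto)
    then show ?thesis by (simp add: c_def)
  qed
  have eq: "S t - S 0 = (poly A s - poly A 0) + c * (poly B s - poly B 0) + (c - 1) * poly B 0"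
    using dec[of t] dec[of 0] by (simp add: s_def c_def algebra_simps)
  have "\<bar>S t - S 0\<bar> \<le> \<bar>poly A s - poly A 0\<bar> + \<bar>poly B s - poly B 0\<bar> + (t/2) * (2*M)"
  proof -
    have "\<bar>c * (poly B s - poly B 0)\<bar> \<le> \<bar>poly B s - poly B 0\<bar>"
      using c1 by (simp add: abs_mult mult_left_le_one_le)
    moreover have "\<bar>(c - 1) * poly B 0\<bar> \<le> (t/2) * (2*M)"
    proof -
      have "\<bar>(c - 1) * poly B 0\<bar> = (1 - c) * \<bar>poly B 0\<bar>" using c1 by (simp add: abs_mult)
      also have "\<dots> \<le> (t/2) * (2*M)" using c2 B0 t0 by (intro mult_mono) auto
      finally show ?thesis .
    qed
    ultimately show ?thesis unfolding eq by linarith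
  qed
  also have "\<dots> \<le> 54 * n * M * s / \<sigma> + t * M"
  proof -
    have h1: "\<bar>poly A s - poly A 0\<bar> \<le> 18 * n * M * s / \<sigma>" using dA' s0 by (simp add: field_simps)
    have h2: "\<bar>poly B s - poly B 0\<bar> \<le> 36 * n * M * s / \<sigma>" using dB' s0 by (simp add: field_simps)
    have "18 * n * M * s / \<sigma> + 36 * n * M * s / \<sigma> = 54 * n * M * s / \<sigma>"
      by (simp add: field_simps)
    then show ?thesis using h1 h2 by linarith
  qed
  also have "54 * n * M * s / \<sigma> \<le> 54 * n * M * (t/2) / (\<beta>/4)"
    using s0 s1 \<sigma>lb b0 M0 by (intro frac_le mult_left_mono mult_nonneg_nonneg) auto
  also have "t * M \<le> 2 * n * t * M / \<beta>"
  proof -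
    have "\<beta> \<le> 2 * n" using bpi pi_less_4 n1 by linarith
    then have "1 \<le> 2 * n / \<beta>" using b0 by simp
    then have "t * M * 1 \<le> t * M * (2 * n / \<beta>)" using t0 M0 by (intro mult_left_mono) auto
    then show ?thesis by (simp add: mult_ac)
  qed
  finally show ?thesis using b0 by (simp add: field_simps)
qed



lemma tp_deriv:
  "(tp n a b has_real_derivative tp n (\<lambda>k. if k = 0 then 0 else real k * b k) (\<lambda>k. - (real k * a k)) x) (at x)"
proof -
  have "((\<lambda>x. a 0 + (\<Sum>k=1..n. a k * cos (real k * x) + b k * sin (real k * x))) has_real_derivative
      0 + (\<Sum>k=1..n. a k * (- sin (real k * x) * real k) + b k * (cos (real k * x) * real k))) (at x)"
  proof (rule DERIV_add[OF DERIV_const DERIV_sum])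
    fix k
    show "((\<lambda>x. a k * cos (real k * x) + b k * sin (real k * x)) has_real_derivative
       a k * (- sin (real k * x) * real k) + b k * (cos (real k * x) * real k)) (at x)"
      by (intro DERIV_add DERIV_cmult DERIV_chain2[OF DERIV_cos] DERIV_chain2[OF DERIV_sin]
          DERIV_cmult_Id[of "real k", unfolded mult.commute[of _ "real k"]])
  qed
  moreover have "0 + (\<Sum>k=1..n. a k * (- sin (real k * x) * real k) + b k * (cos (real k * x) * real k))
     = tp n (\<lambda>k. if k = 0 then 0 else real k * b k) (\<lambda>k. - (real k * a k)) x"
    unfolding tp_def by (auto intro!: sum.cong simp: algebra_simps)
  ultimately show ?thesis unfolding tp_def[abs_def] by simp
qed

lemma trig_deriv:
  assumes "trig_poly n T"
  shows "trig_poly n (deriv T) \<and> (\<forall>x. (T has_real_derivative deriv T x) (at x))"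
proof -
  obtain a b where T: "T = tp n a b" using assms trig_poly_tp by blast
  have d: "deriv T = tp n (\<lambda>k. if k = 0 then 0 else real k * b k) (\<lambda>k. - (real k * a k))"
    unfolding T by (rule ext, rule DERIV_imp_deriv, rule tp_deriv)
  have "trig_poly n (deriv T)" unfolding d trig_poly_tp by blast
  moreover have "\<forall>x. (T has_real_derivative deriv T x) (at x)" unfolding d unfolding T using tp_deriv by blast
  ultimately show ?thesis by blast
qed

lemma trig_derivs:
  assumes "trig_poly n T"
  shows "trig_poly n ((deriv ^^ k) T) \<and> (\<forall>x. ((deriv ^^ k) T has_real_derivative (deriv ^^ Suc k) T x) (at x))"
proof (induction k)
  case 0 then show ?case using trig_deriv[OF assms] assms by simp
next
  case (Suc k)
  then have "trig_poly n ((deriv ^^ Suc k) T)" using trig_deriv[of n "(deriv ^^ k) T"] by simp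
  then show ?case using trig_deriv[of n "(deriv ^^ Suc k) T"] by simp
qed

lemma trig_continuous: "trig_poly n T \<Longrightarrow> continuous_on A T"
  by (metis DERIV_isCont continuous_at_imp_continuous_on trig_deriv)

lemma pderiv_iter_degree: fixes p :: "real poly" shows "degree ((pderiv ^^ k) p) \<le> degree p - k"
proof (induction k)
  case (Suc k)
  have "degree (pderiv ((pderiv ^^ k) p)) = degree ((pderiv ^^ k) p) - 1" by (rule degree_pderiv)
  then show ?case using Suc by simp
qed simp

lemma pderiv_iter_zero:
  fixes P :: "real poly"
  assumes "degree P \<le> r" shows "(pderiv ^^ Suc r) P = 0"
proof -
  have "degree ((pderiv ^^ r) P) = 0" using pderiv_iter_degree[of r P] assms by simp
  then show ?thesis by (simp add: pderiv_eq_0_iff)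
qed

lemma poly_deg0: fixes q :: "real poly" shows "degree q = 0 \<Longrightarrow> poly q x = coeff q 0"
  by (simp add: poly_altdef)

fun fd :: "nat \<Rightarrow> real \<Rightarrow> (real \<Rightarrow> real) \<Rightarrow> real \<Rightarrow> real" where
  "fd 0 h f x = f x"
| "fd (Suc k) h f x = fd k h (\<lambda>y. f (y + h) - f y) x"

lemma fd_lower:
  assumes h: "0 < h" and der: "\<And>j t. (D j has_real_derivative D (Suc j) t) (at t)"
    and lb: "\<And>t. x \<le> t \<Longrightarrow> t \<le> x + real k * h \<Longrightarrow> m \<le> D k t"
  shows "m * h ^ k \<le> fd k h (D 0) x"
  using der lb
proof (induction k arbitrary: D m)
  case 0 then show ?case by simp
next
  case (Suc k)
  define D' where "D' j y = D j (y + h) - D j y" for j y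
  have der': "(D' j has_real_derivative D' (Suc j) t) (at t)" for j t
  proof -
    have sh: "((\<lambda>z. z + h) has_real_derivative 1) (at t)" by (auto intro!: derivative_eq_intros)
    have "((\<lambda>z. D j (z + h) - D j z) has_real_derivative D (Suc j) (t + h) * 1 - D (Suc j) t) (at t)"
      by (intro DERIV_diff DERIV_chain2[OF Suc.prems(1) sh] Suc.prems(1))
    then show ?thesis unfolding D'_def by simp
  qed
  have lb': "m * h \<le> D' k t" if "x \<le> t" "t \<le> x + real k * h" for t
  proof -
    have "m * (t + h - t) \<le> D k (t + h) - D k t"
    proof (rule incr_lower[OF _ Suc.prems(1)])
      fix u assume "t < u" "u < t + h"
      then show "m \<le> D (Suc k) u" using that h by (intro Suc.prems(2)) (auto simp: algebra_simps)
    qed (use h in auto)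
    then show ?thesis by (simp add: D'_def)
  qed
  have "(m * h) * h ^ k \<le> fd k h (D' 0) x" by (rule Suc.IH[OF der' lb'])
  moreover have "fd k h (D' 0) x = fd (Suc k) h (D 0) x" by (simp add: D'_def[abs_def])
  ultimately show ?case by (simp add: mult_ac)
qed

lemma fd_neg: "fd k h (\<lambda>y. - f y) x = - fd k h f x"
proof (induction k arbitrary: f)
  case (Suc k f)
  have "(\<lambda>y. - f (y + h) - - f y) = (\<lambda>y. - (f (y + h) - f y))" by auto
  then show ?case using Suc.IH[of "\<lambda>y. f (y + h) - f y"] by simp
qed simp

lemma fd_upper:
  assumes h: "0 < h" and der: "\<And>j t. (D j has_real_derivative D (Suc j) t) (at t)"
    and ub: "\<And>t. x \<le> t \<Longrightarrow> t \<le> x + real k * h \<Longrightarrow> D k t \<le> m"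
  shows "fd k h (D 0) x \<le> m * h ^ k"
proof -
  have "(-m) * h ^ k \<le> fd k h ((\<lambda>j t. - D j t) 0) x"
    by (rule fd_lower[OF h]) (auto intro: derivative_intros der simp: ub)
  then show ?thesis by (simp add: fd_neg)
qed

lemma fd_bound:
  assumes "\<And>t. x \<le> t \<Longrightarrow> t \<le> x + real k * h \<Longrightarrow> \<bar>f t\<bar> \<le> e" and "0 \<le> h"
  shows "\<bar>fd k h f x\<bar> \<le> 2 ^ k * e"
  using assms(1)
proof (induction k arbitrary: f e)
  case 0 then show ?case by simp
next
  case (Suc k)
  have "\<bar>fd k h (\<lambda>y. f (y + h) - f y) x\<bar> \<le> 2 ^ k * (2 * e)"
  proof (rule Suc.IH)
    fix t assume t: "x \<le> t" "t \<le> x + real k * h"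
    have "\<bar>f (t + h)\<bar> \<le> e" using t assms(2) by (intro Suc.prems) (auto simp: algebra_simps)
    moreover have "\<bar>f t\<bar> \<le> e" using t assms(2) by (intro Suc.prems) (auto simp: algebra_simps)
    ultimately show "\<bar>f (t + h) - f t\<bar> \<le> 2 * e" by linarith
  qed
  then show ?case by (simp add: mult_ac)
qed



lemma main_bound:
  fixes r n :: nat and b \<epsilon> :: real and T :: "real \<Rightarrow> real" and P :: "real poly"
  assumes r1: "r \<ge> 1" and b0: "0 < b" and bpi: "b \<le> pi" and n1: "n \<ge> 1" and tpT: "trig_poly n T"
    and sgn: "\<And>t. \<bar>t\<bar> \<le> b \<Longrightarrow> 0 \<le> t * (deriv ^^ Suc r) T t" and degP: "degree P \<le> r"
    and epsb: "\<And>x. \<bar>x\<bar> \<le> b \<Longrightarrow> \<bar>F r x + poly P x - T x\<bar> \<le> \<epsilon>"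
  shows "(b / (4 * r)) ^ r / (660 * 2 ^ (r + 1)) \<le> n * \<epsilon>"
proof -
  define G where "G x = F r x + poly P x - T x" for x
  define h where "h = b / (4 * r)"
  have h0: "0 < h" using b0 r1 by (simp add: h_def)
  have rh: "real r * h = b/4" using r1 by (simp add: h_def)
  have hb: "h \<le> b" using b0 r1 by (simp add: h_def field_simps)
  define Tk where "Tk k = (deriv ^^ k) T" for k
  have Tder: "(Tk k has_real_derivative Tk (Suc k) x) (at x)" for k x
    using trig_derivs[OF tpT, of k] by (simp add: Tk_def)
  have Ttp: "trig_poly n (Tk k)" for k using trig_derivs[OF tpT, of k] by (simp add: Tk_def)
  define Pk where "Pk k x = poly ((pderiv ^^ k) P) x" for k x
  have Pder: "(Pk k has_real_derivative Pk (Suc k) x) (at x)" for k x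
    unfolding Pk_def[abs_def] by simp
  define E where "E k x = (if k \<le> r then x ^ (r - k) / fact (r - k) else 0)" for k and x :: real
  have Eder: "(E k has_real_derivative E (Suc k) x) (at x)" for k x
  proof (cases "k < r")
    case True
    then obtain j where j: "r - k = Suc j" by (metis Suc_diff_Suc)
    then have j2: "r - Suc k = j" by simp
    have "((\<lambda>x. x ^ Suc j / fact (Suc j)) has_real_derivative (real (Suc j) * x ^ j) / fact (Suc j)) (at x)"
      using DERIV_cdivide[OF DERIV_pow[of "Suc j" x], of "fact (Suc j)"] by simp
    moreover have "(real (Suc j) * x ^ j) / fact (Suc j) = x ^ j / fact j"
    proof -
      have fs: "(fact (Suc j) :: real) = real (Suc j) * fact j" by (simp only: fact_Suc of_nat_mult)
      show ?thesis unfolding fs by (rule mult_divide_mult_cancel_left) simp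
    qed
    ultimately show ?thesis using True unfolding E_def[abs_def] j j2 by simp
  next
    case False
    then show ?thesis unfolding E_def[abs_def]
      by (cases "k = r") (auto intro!: derivative_eq_intros)
  qed
  define Dm where "Dm k x = - E k x + Pk k x - Tk k x" for k x
  define Dp where "Dp k x = E k x + Pk k x - Tk k x" for k x
  have Dmder: "(Dm k has_real_derivative Dm (Suc k) x) (at x)" for k x
    unfolding Dm_def[abs_def] by (intro DERIV_diff DERIV_add DERIV_minus Eder Pder Tder)
  have Dpder: "(Dp k has_real_derivative Dp (Suc k) x) (at x)" for k x
    unfolding Dp_def[abs_def] by (intro DERIV_diff DERIV_add Eder Pder Tder)
  have rpow: "x ^ r = x * x ^ (r - 1)" for x :: real
    using r1 by (metis Suc_diff_1 less_le_trans power_Suc zero_less_one)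
  have Gm: "Dm 0 x = G x" if "x \<le> 0" for x
    using that by (simp add: Dm_def E_def Pk_def Tk_def G_def F_def rpow abs_of_nonpos)
  have Gp: "Dp 0 x = G x" if "0 \<le> x" for x
    using that by (simp add: Dp_def E_def Pk_def Tk_def G_def F_def rpow)
  have Gb: "\<bar>G x\<bar> \<le> \<epsilon>" if "-b \<le> x" "x \<le> b" for x using epsb that by (simp add: G_def)
  have Pconst: "Pk r x = Pk r 0" for x
  proof -
    have "degree ((pderiv ^^ r) P) = 0" using pderiv_iter_degree[of r P] degP by simp
    then show ?thesis by (simp add: Pk_def poly_deg0)
  qed
  have PSr: "Pk (Suc r) x = 0" for x using pderiv_iter_zero[OF degP] by (simp add: Pk_def)
  define V where "V x = -1 + Pk r 0 - Tk r x" for x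
  have Vm: "Dm r x = V x" for x by (simp add: Dm_def V_def E_def Pconst[of x])
  have Vp: "Dp r x = V x + 2" for x by (simp add: Dp_def V_def E_def Pconst[of x])
  have VSr: "Dm (Suc r) x = - Tk (Suc r) x" for x by (simp add: Dm_def E_def PSr)
  have Vder: "(V has_real_derivative - Tk (Suc r) x) (at x)" for x
    using Dmder[of r x] by (simp add: Vm[abs_def] VSr)
  define W where "W = Dm (r - 1)"
  have Wp: "Dp (r - 1) x = W x + 2 * x" for x
  proof -
    have "r - (r - 1) = 1" using r1 by simp
    then show ?thesis using r1 by (simp add: W_def Dp_def Dm_def E_def)
  qed
  have Wder: "(W has_real_derivative V x) (at x)" for x
    using Dmder[of "r - 1" x] r1 by (simp add: W_def Vm)
  have Tsg: "0 \<le> t * Tk (Suc r) t" if "\<bar>t\<bar> \<le> b" for t using sgn[OF that] by (simp add: Tk_def)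
  have V1: "V y \<le> V x" if "0 \<le> x" "x \<le> y" "y \<le> b" for x y
  proof -
    have "V y - V x \<le> 0 * (y - x)"
    proof (rule incr_upper[OF that(2) Vder])
      fix t assume t: "x < t" "t < y"
      then have "0 \<le> t * Tk (Suc r) t" using that by (intro Tsg) auto
      then show "- Tk (Suc r) t \<le> 0" using t that by (simp add: zero_le_mult_iff)
    qed
    then show ?thesis by simp
  qed
  have V2: "V x \<le> V y" if "-b \<le> x" "x \<le> y" "y \<le> 0" for x y
  proof -
    have "0 * (y - x) \<le> V y - V x"
    proof (rule incr_lower[OF that(2) Vder])
      fix t assume t: "x < t" "t < y"
      then have "0 \<le> t * Tk (Suc r) t" using that by (intro Tsg) auto
      then show "0 \<le> - Tk (Suc r) t" using t that by (simp add: zero_le_mult_iff)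
    qed
    then show ?thesis by simp
  qed
  define \<eta> where "\<eta> = 2^r * \<epsilon> / h^r"
  have hr0: "0 < h^r" using h0 by simp
  have e0: "0 \<le> \<epsilon>" using Gb[of 0] b0 by auto
  have R1: "- \<eta> \<le> V x + 2" if x: "0 \<le> x" "x \<le> b/2" for x
  proof -
    have up: "fd r h (Dp 0) x \<le> (V x + 2) * h^r"
    proof (rule fd_upper[where D=Dp, OF h0 Dpder])
      fix t assume "x \<le> t" "t \<le> x + real r * h"
      then show "Dp r t \<le> V x + 2" using x rh b0 V1[of x t] by (simp add: Vp)
    qed
    have bd: "\<bar>fd r h (Dp 0) x\<bar> \<le> 2^r * \<epsilon>"
    proof (rule fd_bound)
      fix t assume "x \<le> t" "t \<le> x + real r * h"
      then show "\<bar>Dp 0 t\<bar> \<le> \<epsilon>" using x rh b0 by (simp add: Gp Gb)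
    qed (use h0 in simp)
    have "- (2^r * \<epsilon>) \<le> (V x + 2) * h^r" using up bd by linarith
    then have "(- (2^r * \<epsilon>)) / h^r \<le> V x + 2" by (simp only: pos_divide_le_eq[OF hr0])
    then show ?thesis unfolding \<eta>_def by simp
  qed
  have L1: "- \<eta> \<le> V y" if y: "-b/2 \<le> y" "y \<le> 0" for y
  proof -
    have up: "fd r h (Dm 0) (y - b/4) \<le> V y * h^r"
    proof (rule fd_upper[where D=Dm, OF h0 Dmder])
      fix t assume "y - b/4 \<le> t" "t \<le> y - b/4 + real r * h"
      then show "Dm r t \<le> V y" using y rh b0 V2[of t y] by (simp add: Vm)
    qed
    have bd: "\<bar>fd r h (Dm 0) (y - b/4)\<bar> \<le> 2^r * \<epsilon>"
    proof (rule fd_bound)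
      fix t assume "y - b/4 \<le> t" "t \<le> y - b/4 + real r * h"
      then show "\<bar>Dm 0 t\<bar> \<le> \<epsilon>" using y rh b0 by (simp add: Gm Gb)
    qed (use h0 in simp)
    have "- (2^r * \<epsilon>) \<le> V y * h^r" using up bd by linarith
    then have "(- (2^r * \<epsilon>)) / h^r \<le> V y" by (simp only: pos_divide_le_eq[OF hr0])
    then show ?thesis unfolding \<eta>_def by simp
  qed
  have goal_eq: "(b / (4 * r)) ^ r / (660 * 2 ^ (r + 1)) = h^r / (660 * 2 ^ (r + 1))"
    by (simp add: h_def)
  show ?thesis
  proof (cases "\<eta> \<le> 1/2")
    case False
    then have "h^r < 2 * (2^r * \<epsilon>)" using hr0 unfolding \<eta>_def by (simp add: field_simps)
    moreover have "\<epsilon> * (2 * 2^r) \<le> \<epsilon> * (2^r * 1320)" using e0 by (intro mult_left_mono) auto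
    ultimately have "h^r / (660 * 2 ^ (r + 1)) \<le> \<epsilon>" by (simp add: field_simps)
    also have "\<epsilon> \<le> n * \<epsilon>" using n1 e0 by (simp add: mult_le_cancel_right1)
    finally show ?thesis unfolding goal_eq .
  next
    case True
    have eta0: "0 \<le> \<eta>" unfolding \<eta>_def using e0 hr0 by simp
    define d where "d = b / (660 * n)"
    have d0: "0 < d" using b0 n1 by (simp add: d_def)
    have d8: "d \<le> b/8" using b0 n1 by (simp add: d_def field_simps)
    have N: "-1 \<le> V t" if t: "0 \<le> t" "t \<le> d" for t
    proof -
      define \<Lambda> where "\<Lambda> = V 0 + 2 + \<eta>"
      have V0: "- \<eta> \<le> V 0" using L1[of 0] b0 by simp
      have L0: "0 \<le> \<Lambda>" using V0 True by (simp add: \<Lambda>_def)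
      define S where "S x = Tk r x - (Tk r 0 + \<Lambda>/2)" for x
      have tpS: "trig_poly n S"
      proof -
        obtain a bb where ab: "Tk r = tp n a bb" using Ttp[of r] trig_poly_tp by blast
        have "S = tp n (a(0 := a 0 - (Tk r 0 + \<Lambda>/2))) bb"
          unfolding S_def[abs_def] ab tp_def by (auto intro!: sum.cong simp: fun_eq_iff)
        then show ?thesis using trig_poly_tp by blast
      qed
      have Sx: "S x = V 0 - V x - \<Lambda>/2" for x by (simp add: S_def V_def)
      have Sb: "\<bar>S x\<bar> \<le> \<Lambda>/2" if x: "\<bar>x\<bar> \<le> b/2" for x
      proof -
        have "V x \<le> V 0 \<and> -2 - \<eta> \<le> V x"
        proof (cases "0 \<le> x")
          case True then show ?thesis using V1[of 0 x] R1[of x] x b0 by auto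
        next
          case False then show ?thesis using V2[of x 0] L1[of x] x b0 eta0 by auto
        qed
        then have h1: "V x \<le> V 0" and h2: "-2 - \<eta> \<le> V x" by auto
        show ?thesis unfolding Sx \<Lambda>_def using h1 h2 by (auto simp: abs_le_iff field_simps)
      qed
      have bl: "\<bar>S t - S 0\<bar> \<le> 110 * n * t * (\<Lambda>/2) / (b/2)"
        by (rule local_bern[OF n1 _ _ tpS Sb]) (use b0 bpi t d8 in auto)
      have "110 * n * t * (\<Lambda>/2) / (b/2) \<le> 110 * n * d * (\<Lambda>/2) / (b/2)"
        using t b0 L0 by (intro divide_right_mono mult_right_mono mult_left_mono) auto
      also have "\<dots> = \<Lambda>/6" using b0 n1 by (simp add: d_def field_simps)
      finally have "V 0 - V t \<le> \<Lambda>/6" using bl by (simp add: Sx)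
      then show ?thesis using V0 True by (simp add: \<Lambda>_def)
    qed
    define Y where "Y = h^(r-1)"
    have Y0: "0 < Y" using h0 by (simp add: Y_def)
    have hrY: "h^r = h * Y" using r1 unfolding Y_def by (metis Suc_diff_1 less_le_trans power_Suc zero_less_one)
    define Z where "Z = 2^(r-1) * \<epsilon>"
    have Z0: "0 \<le> Z" using e0 by (simp add: Z_def)
    have twor: "(2::real)^r = 2 * 2^(r-1)" using r1 by (metis Suc_diff_1 less_le_trans power_Suc zero_less_one)
    have rh1: "real (r - 1) * h \<le> b/4" using rh h0 r1 by (simp add: of_nat_diff algebra_simps)
    have Wlow: "W s + d - \<eta> * b \<le> W t + 2 * t" if s: "-b/2 \<le> s" "s \<le> -b/4" and t: "b/4 \<le> t" "t \<le> b/2" for s t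
    proof -
      have a1: "(- \<eta>) * (0 - s) \<le> W 0 - W s"
        by (rule incr_lower[OF _ Wder]) (use s b0 L1 in auto)
      have a2: "(-1) * (d - 0) \<le> W d - W 0"
        by (rule incr_lower[OF _ Wder]) (use d0 N in auto)
      have a3: "(-2 - \<eta>) * (t - d) \<le> W t - W d"
      proof (rule incr_lower[OF _ Wder])
        fix u assume "d < u" "u < t"
        then show "-2 - \<eta> \<le> V u" using R1[of u] d0 t by auto
      qed (use d8 t b0 in auto)
      have "0 \<le> \<eta> * (s - t + d + b)" using eta0 s t d0 by (intro mult_nonneg_nonneg) auto
      then show ?thesis using a1 a2 a3 by (simp add: algebra_simps)
    qed
    have right: "W s + d - \<eta> * b \<le> Z / Y" if s: "-b/2 \<le> s" "s \<le> -b/4" for s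
    proof -
      have "(W s + d - \<eta> * b) * h ^ (r-1) \<le> fd (r-1) h (Dp 0) (b/4)"
      proof (rule fd_lower[where D=Dp, OF h0 Dpder])
        fix t assume "b/4 \<le> t" "t \<le> b/4 + real (r-1) * h"
        then show "W s + d - \<eta> * b \<le> Dp (r-1) t" unfolding Wp using Wlow[OF s, of t] rh1 by auto
      qed
      also have "\<dots> \<le> 2^(r-1) * \<epsilon>"
      proof -
        have "\<bar>fd (r-1) h (Dp 0) (b/4)\<bar> \<le> 2^(r-1) * \<epsilon>"
        proof (rule fd_bound)
          fix t assume "b/4 \<le> t" "t \<le> b/4 + real (r-1) * h"
          then show "\<bar>Dp 0 t\<bar> \<le> \<epsilon>" using rh1 b0 by (simp add: Gp Gb)
        qed (use h0 in simp)
        then show ?thesis by simp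
      qed
      finally have "(W s + d - \<eta> * b) * Y \<le> Z" by (simp add: Y_def Z_def)
      then show ?thesis using Y0 by (simp add: pos_le_divide_eq)
    qed
    have "- (2^(r-1) * \<epsilon>) \<le> fd (r-1) h (Dm 0) (-b/2)"
    proof -
      have "\<bar>fd (r-1) h (Dm 0) (-b/2)\<bar> \<le> 2^(r-1) * \<epsilon>"
      proof (rule fd_bound)
        fix t assume "-b/2 \<le> t" "t \<le> -b/2 + real (r-1) * h"
        then show "\<bar>Dm 0 t\<bar> \<le> \<epsilon>" using rh1 b0 by (simp add: Gm Gb)
      qed (use h0 in simp)
      then show ?thesis by simp
    qed
    also have "fd (r-1) h (Dm 0) (-b/2) \<le> (Z / Y - d + \<eta> * b) * h^(r-1)"
    proof (rule fd_upper[where D=Dm, OF h0 Dmder])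
      fix t assume "-b/2 \<le> t" "t \<le> -b/2 + real (r-1) * h"
      then show "Dm (r-1) t \<le> Z / Y - d + \<eta> * b" using right[of t] rh1 by (simp add: W_def)
    qed
    finally have "- Z \<le> (Z / Y - d + \<eta> * b) * Y" by (simp add: Y_def Z_def)
    then have "d * Y \<le> 2 * Z + \<eta> * b * Y" using Y0 by (simp add: algebra_simps)
    moreover have "\<eta> * b * Y = 2 * Z * b / h"
      unfolding \<eta>_def hrY twor Z_def using h0 Y0 by (simp add: field_simps)
    ultimately have "d * Y * h \<le> (2 * Z + 2 * Z * b / h) * h" using h0 by (simp add: mult_right_mono)
    also have "\<dots> = 2 * Z * h + 2 * Z * b" using h0 by (simp add: field_simps)
    also have "\<dots> \<le> 4 * Z * b" using Z0 hb by (simp add: mult_left_mono)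
    finally have "b * (h * Y) \<le> b * (2640 * n * Z)" using n1 by (simp add: d_def field_simps)
    then have "h * Y \<le> 2640 * n * Z" using b0 by simp
    then have "h^r / (660 * 2 ^ (r + 1)) \<le> n * \<epsilon>"
      unfolding hrY Z_def using twor by (simp add: field_simps)
    then show ?thesis unfolding goal_eq .
  qed
qed



theorem lemma4p2:
  fixes r :: nat
  assumes "r \<ge> 1"
  shows "\<exists>c3 > 0. \<forall>b (n::nat) T (P :: real poly).
           0 < b \<and> b \<le> pi \<and> n \<ge> 1 \<and> trig_poly n T
           \<and> (\<forall>t. \<bar>t\<bar> \<le> b \<longrightarrow> t * (deriv ^^ Suc r) T t \<ge> 0)
           \<and> degree P \<le> r
           \<longrightarrow> real n * sup_norm_on (-b) b (\<lambda>x. F r x + poly P x - T x) \<ge> c3 * b ^ r"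
proof (intro exI[of _ "1 / (660 * 2 ^ (r + 1) * (4 * real r) ^ r)"] conjI allI impI)
  show "0 < 1 / (660 * 2 ^ (r + 1) * (4 * real r) ^ r)" using assms by simp
  fix b :: real and n :: nat and T :: "real \<Rightarrow> real" and P :: "real poly"
  assume H: "0 < b \<and> b \<le> pi \<and> n \<ge> 1 \<and> trig_poly n T
           \<and> (\<forall>t. \<bar>t\<bar> \<le> b \<longrightarrow> t * (deriv ^^ Suc r) T t \<ge> 0) \<and> degree P \<le> r"
  define G where "G x = F r x + poly P x - T x" for x
  define \<epsilon> where "\<epsilon> = sup_norm_on (-b) b G"
  have contG: "continuous_on {-b..b} (\<lambda>x. \<bar>G x\<bar>)"
    unfolding G_def F_def using trig_continuous[of n T] H by (intro continuous_intros) auto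
  have bdd: "bdd_above ((\<lambda>x. \<bar>G x\<bar>) ` {-b..b})"
    by (intro bounded_imp_bdd_above compact_imp_bounded compact_continuous_image contG) simp
  have epsb: "\<bar>F r x + poly P x - T x\<bar> \<le> \<epsilon>" if "\<bar>x\<bar> \<le> b" for x
  proof -
    have "\<bar>G x\<bar> \<le> (SUP x\<in>{-b..b}. \<bar>G x\<bar>)" using that by (intro cSUP_upper bdd) auto
    then show ?thesis by (simp add: \<epsilon>_def sup_norm_on_def G_def)
  qed
  have "(b / (4 * r)) ^ r / (660 * 2 ^ (r + 1)) \<le> n * \<epsilon>"
    using H by (intro main_bound[OF assms _ _ _ _ _ _ epsb]) auto
  moreover have "1 / (660 * 2 ^ (r + 1) * (4 * real r) ^ r) * b ^ r = (b / (4 * r)) ^ r / (660 * 2 ^ (r + 1))"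
    by (simp add: power_divide)
  ultimately show "1 / (660 * 2 ^ (r + 1) * (4 * real r) ^ r) * b ^ r \<le> real n * sup_norm_on (-b) b (\<lambda>x. F r x + poly P x - T x)"
    by (simp add: \<epsilon>_def G_def[abs_def])
qed

end
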